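(* Let $p$ be a prime and $n$ a positive integer. If $\{(a_i,b_i,c_i)\}_{i=1}^m$ is a tricolored ordered sum-free set in $\mathbb{F}_p^n$, then $m\le 3N$, where $N$ is the number of monomials in $n$ variables of total degree at most $(p-1)n/3$ in which each variable has degree at most $p-1$; equivalently, \[N=\sum \frac{n!}{n_0!\,n_1!\cdots n_{p-1}!},\] the sum taken over all non-negative integers $n_0,n_1,\ldots,n_{p-1}$ with $n_0+n_1+\cdots+n_{p-1}=n$ and $n_1+2n_2+\cdots+(p-1)n_{p-1}\le (p-1)n/3$.
   Context: A tricolored ordered sum-free set in an abelian group $H$ is a collection $\{(a_i,b_i,c_i)\}_{i=1}^m$ of ordered triples of elements of $H$ such that (i) $a_i+b_i+c_i=0$ for all $i=1,\ldots,m$, and (ii) for all $i,j,k\in\{1,\ldots,m\}$, if $a_i+b_j+c_k=0$ then $i\le j\le k$. *)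

theory Defs
  imports "HOL-Computational_Algebra.Primes"
begin

text \<open>The group F_p^n is modelled concretely: a vector is a function nat => nat whose
  coordinates i < n lie in {0..<p} and whose coordinates i >= n are 0.
  Addition is coordinatewise modulo p.\<close>

definition Fp_vecs :: "nat \<Rightarrow> nat \<Rightarrow> (nat \<Rightarrow> nat) set" where
  "Fp_vecs p n = {v. (\<forall>i<n. v i < p) \<and> (\<forall>i\<ge>n. v i = 0)}"

definition sum3_zero :: "nat \<Rightarrow> nat \<Rightarrow> (nat \<Rightarrow> nat) \<Rightarrow> (nat \<Rightarrow> nat) \<Rightarrow> (nat \<Rightarrow> nat) \<Rightarrow> bool" where
  "sum3_zero p n x y z \<longleftrightarrow> (\<forall>i<n. (x i + y i + z i) mod p = 0)"

definition tricolored_ordered_sum_free ::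
  "nat \<Rightarrow> nat \<Rightarrow> nat \<Rightarrow> (nat \<Rightarrow> nat \<Rightarrow> nat) \<Rightarrow> (nat \<Rightarrow> nat \<Rightarrow> nat) \<Rightarrow> (nat \<Rightarrow> nat \<Rightarrow> nat) \<Rightarrow> bool" where
  "tricolored_ordered_sum_free p n m a b c \<longleftrightarrow>
     (\<forall>i\<in>{1..m}. a i \<in> Fp_vecs p n \<and> b i \<in> Fp_vecs p n \<and> c i \<in> Fp_vecs p n) \<and>
     (\<forall>i\<in>{1..m}. sum3_zero p n (a i) (b i) (c i)) \<and>
     (\<forall>i\<in>{1..m}. \<forall>j\<in>{1..m}. \<forall>k\<in>{1..m}.
        sum3_zero p n (a i) (b j) (c k) \<longrightarrow> i \<le> j \<and> j \<le> k)"

definition bounded_monomials :: "nat \<Rightarrow> nat \<Rightarrow> (nat \<Rightarrow> nat) set" where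
  "bounded_monomials p n = {e. (\<forall>i<n. e i \<le> p - 1) \<and> (\<forall>i\<ge>n. e i = 0) \<and>
                               3 * (\<Sum>i<n. e i) \<le> (p - 1) * n}"

end

theory Submission
  imports Defs "HOL-Number_Theory.Number_Theory" "HOL-Library.FuncSet"
begin



definition KK :: "nat \<Rightarrow> (nat \<times> nat \<times> nat) set" where
  "KK q = {..q} \<times> {..q} \<times> {..q}"

definition tc :: "nat \<Rightarrow> nat \<times> nat \<times> nat \<Rightarrow> int" where
  "tc q \<kappa> = (case \<kappa> of (\<alpha>, \<beta>, \<gamma>) \<Rightarrow>
     (if \<alpha> + \<beta> + \<gamma> = q then int ((q choose \<alpha>) * ((q - \<alpha>) choose \<beta>)) else 0))"

lemma inner_gamma:
  fixes y z :: int
  shows "(\<Sum>\<gamma>\<le>q. tc q (\<alpha>, \<beta>, \<gamma>) * x * y ^ \<beta> * z ^ \<gamma>) =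
    (if \<alpha> + \<beta> \<le> q then int ((q choose \<alpha>) * ((q - \<alpha>) choose \<beta>)) * x * y ^ \<beta> * z ^ (q - \<alpha> - \<beta>) else 0)"
proof (cases "\<alpha> + \<beta> \<le> q")
  case True
  have "(\<Sum>\<gamma>\<le>q. tc q (\<alpha>, \<beta>, \<gamma>) * x * y ^ \<beta> * z ^ \<gamma>) =
     (\<Sum>\<gamma>\<le>q. if \<gamma> = q - \<alpha> - \<beta> then int ((q choose \<alpha>) * ((q - \<alpha>) choose \<beta>)) * x * y ^ \<beta> * z ^ \<gamma> else 0)"
    by (rule sum.cong) (auto simp: tc_def)
  also have "\<dots> = int ((q choose \<alpha>) * ((q - \<alpha>) choose \<beta>)) * x * y ^ \<beta> * z ^ (q - \<alpha> - \<beta>)"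
    by (subst sum.delta) auto
  finally show ?thesis using True by simp
next
  case False
  then show ?thesis by (auto simp: tc_def intro!: sum.neutral)
qed

lemma trinom:
  fixes x y z :: int
  shows "(x + y + z) ^ q = (\<Sum>\<kappa>\<in>KK q. tc q \<kappa> * x ^ fst \<kappa> * y ^ fst (snd \<kappa>) * z ^ snd (snd \<kappa>))"
proof -
  have "(x + y + z) ^ q = (x + (y + z)) ^ q" by (simp add: add.assoc)
  also have "\<dots> = (\<Sum>\<alpha>\<le>q. of_nat (q choose \<alpha>) * x ^ \<alpha> * (y + z) ^ (q - \<alpha>))"
    by (rule binomial_ring)
  also have "\<dots> = (\<Sum>\<alpha>\<le>q. \<Sum>\<beta>\<le>q - \<alpha>. int ((q choose \<alpha>) * ((q - \<alpha>) choose \<beta>)) * x ^ \<alpha> * y ^ \<beta> * z ^ (q - \<alpha> - \<beta>))"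
  proof (rule sum.cong[OF refl])
    fix \<alpha> assume "\<alpha> \<in> {..q}"
    have "(y + z) ^ (q - \<alpha>) = (\<Sum>\<beta>\<le>q - \<alpha>. of_nat ((q - \<alpha>) choose \<beta>) * y ^ \<beta> * z ^ (q - \<alpha> - \<beta>))"
      by (rule binomial_ring)
    then show "of_nat (q choose \<alpha>) * x ^ \<alpha> * (y + z) ^ (q - \<alpha>) = (\<Sum>\<beta>\<le>q - \<alpha>. int ((q choose \<alpha>) * ((q - \<alpha>) choose \<beta>)) * x ^ \<alpha> * y ^ \<beta> * z ^ (q - \<alpha> - \<beta>))"
      by (simp add: sum_distrib_left mult_ac)
  qed
  also have "\<dots> = (\<Sum>\<alpha>\<le>q. \<Sum>\<beta>\<le>q. \<Sum>\<gamma>\<le>q. tc q (\<alpha>, \<beta>, \<gamma>) * x ^ \<alpha> * y ^ \<beta> * z ^ \<gamma>)"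
  proof (rule sum.cong[OF refl])
    fix \<alpha> assume a: "\<alpha> \<in> {..q}"
    have "(\<Sum>\<beta>\<le>q. \<Sum>\<gamma>\<le>q. tc q (\<alpha>, \<beta>, \<gamma>) * x ^ \<alpha> * y ^ \<beta> * z ^ \<gamma>) =
       (\<Sum>\<beta>\<le>q. if \<beta> \<le> q - \<alpha> then int ((q choose \<alpha>) * ((q - \<alpha>) choose \<beta>)) * x ^ \<alpha> * y ^ \<beta> * z ^ (q - \<alpha> - \<beta>) else 0)"
      by (rule sum.cong[OF refl], subst inner_gamma, use a in auto)
    also have "\<dots> = (\<Sum>\<beta>\<in>{..q - \<alpha>}. int ((q choose \<alpha>) * ((q - \<alpha>) choose \<beta>)) * x ^ \<alpha> * y ^ \<beta> * z ^ (q - \<alpha> - \<beta>))"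
      by (subst sum.If_cases) (auto intro!: sum.cong)
    finally show "(\<Sum>\<beta>\<le>q - \<alpha>. int ((q choose \<alpha>) * ((q - \<alpha>) choose \<beta>)) * x ^ \<alpha> * y ^ \<beta> * z ^ (q - \<alpha> - \<beta>)) =
       (\<Sum>\<beta>\<le>q. \<Sum>\<gamma>\<le>q. tc q (\<alpha>, \<beta>, \<gamma>) * x ^ \<alpha> * y ^ \<beta> * z ^ \<gamma>)" by simp
  qed
  also have "\<dots> = (\<Sum>\<kappa>\<in>KK q. tc q \<kappa> * x ^ fst \<kappa> * y ^ fst (snd \<kappa>) * z ^ snd (snd \<kappa>))"
    unfolding KK_def by (simp add: sum.cartesian_product split_def)
  finally show ?thesis .
qed


definition tcd :: "nat \<Rightarrow> nat \<times> nat \<times> nat \<Rightarrow> int" where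
  "tcd q \<kappa> = (if \<kappa> = (0, 0, 0) then 1 else 0) - tc q \<kappa>"

lemma one_minus_trinom:
  fixes x y z :: int
  shows "1 - (x + y + z) ^ q = (\<Sum>\<kappa>\<in>KK q. tcd q \<kappa> * x ^ fst \<kappa> * y ^ fst (snd \<kappa>) * z ^ snd (snd \<kappa>))"
proof -
  have fin: "finite (KK q)" by (simp add: KK_def)
  have z: "(0, 0, 0) \<in> KK q" by (simp add: KK_def)
  have "(\<Sum>\<kappa>\<in>KK q. (if \<kappa> = (0, 0, 0) then 1 else 0) * x ^ fst \<kappa> * y ^ fst (snd \<kappa>) * z ^ snd (snd \<kappa>)) = (1::int)"
    using fin z by (simp add: if_distrib[of "\<lambda>u. u * _"] cong: if_cong)
  then show ?thesis
    by (simp add: tcd_def trinom[of x y z q] left_diff_distrib sum_subtractf)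
qed

lemma fermat_ind:
  assumes "prime p"
  shows "[1 - int s ^ (p - 1) = (if p dvd s then 1 else 0)] (mod int p)"
proof (cases "p dvd s")
  case True
  have "p - 1 > 0" using prime_gt_1_nat[OF assms] by simp
  then have "int p dvd int s ^ (p - 1)" using True
    by (metis dvd_power int_dvd_int_iff dvd_trans of_nat_power)
  then show ?thesis using True by (simp add: cong_iff_dvd_diff)
next
  case False
  have "[s ^ (p - 1) = 1] (mod p)" by (rule fermat_theorem[OF assms False])
  then have "[int s ^ (p - 1) = 1] (mod int p)"
    by (metis cong_int_iff of_nat_1 of_nat_power)
  then have "[1 - int s ^ (p - 1) = 1 - 1] (mod int p)"
    by (rule cong_diff[OF cong_refl])
  then show ?thesis using False by simp
qed

definition ea :: "nat \<Rightarrow> (nat \<Rightarrow> nat \<times> nat \<times> nat) \<Rightarrow> nat \<Rightarrow> nat" where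
  "ea n e = (\<lambda>t. if t < n then fst (e t) else 0)"
definition eb :: "nat \<Rightarrow> (nat \<Rightarrow> nat \<times> nat \<times> nat) \<Rightarrow> nat \<Rightarrow> nat" where
  "eb n e = (\<lambda>t. if t < n then fst (snd (e t)) else 0)"
definition ec :: "nat \<Rightarrow> (nat \<Rightarrow> nat \<times> nat \<times> nat) \<Rightarrow> nat \<Rightarrow> nat" where
  "ec n e = (\<lambda>t. if t < n then snd (snd (e t)) else 0)"
definition mon :: "nat \<Rightarrow> (nat \<Rightarrow> nat) \<Rightarrow> (nat \<Rightarrow> nat) \<Rightarrow> int" where
  "mon n u \<alpha> = (\<Prod>t<n. int (u t) ^ \<alpha> t)"
definition coef :: "nat \<Rightarrow> nat \<Rightarrow> (nat \<Rightarrow> nat \<times> nat \<times> nat) \<Rightarrow> int" where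
  "coef q n e = (\<Prod>t<n. tcd q (e t))"
definition PE :: "nat \<Rightarrow> nat \<Rightarrow> (nat \<Rightarrow> nat \<times> nat \<times> nat) set" where
  "PE q n = PiE {..<n} (\<lambda>_. KK q)"

lemma finite_PE: "finite (PE q n)"
  by (simp add: PE_def KK_def finite_PiE)

lemma ind_decomp:
  assumes "prime p"
  shows "[(if sum3_zero p n x y z then 1 else 0) =
     (\<Sum>e\<in>PE (p - 1) n. coef (p - 1) n e * mon n x (ea n e) * mon n y (eb n e) * mon n z (ec n e))] (mod int p)"
proof -
  let ?q = "p - 1"
  have "(if sum3_zero p n x y z then 1 else 0) = (\<Prod>t<n. (if p dvd (x t + y t + z t) then 1 else (0::int)))"
    unfolding sum3_zero_def by (induction n) (auto simp: dvd_eq_mod_eq_0 less_Suc_eq)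
  also have "[\<dots> = (\<Prod>t<n. 1 - int (x t + y t + z t) ^ ?q)] (mod int p)"
    by (rule cong_prod, rule cong_sym, rule fermat_ind[OF assms])
  also have "(\<Prod>t<n. 1 - int (x t + y t + z t) ^ ?q) =
     (\<Prod>t<n. \<Sum>\<kappa>\<in>KK ?q. tcd ?q \<kappa> * int (x t) ^ fst \<kappa> * int (y t) ^ fst (snd \<kappa>) * int (z t) ^ snd (snd \<kappa>))"
    by (rule prod.cong[OF refl]) (simp add: one_minus_trinom[symmetric])
  also have "\<dots> = (\<Sum>e\<in>PE ?q n. \<Prod>t<n. tcd ?q (e t) * int (x t) ^ fst (e t) * int (y t) ^ fst (snd (e t)) * int (z t) ^ snd (snd (e t)))"
    unfolding PE_def by (rule prod_sum_PiE) (auto simp: KK_def)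
  also have "\<dots> = (\<Sum>e\<in>PE ?q n. coef ?q n e * mon n x (ea n e) * mon n y (eb n e) * mon n z (ec n e))"
    by (rule sum.cong[OF refl]) (simp add: coef_def mon_def ea_def eb_def ec_def prod.distrib)
  finally show ?thesis .
qed




lemma triangular_inj:
  fixes Nm :: "nat \<Rightarrow> nat \<Rightarrow> int"
  assumes pr: "prime p" and fin: "finite D"
    and c: "c \<in> PiE D (\<lambda>_. {0..<int p})" and c': "c' \<in> PiE D (\<lambda>_. {0..<int p})"
    and diag: "\<forall>i\<in>D. \<not> int p dvd Nm i i"
    and low: "\<forall>i\<in>D. \<forall>k\<in>D. k < i \<longrightarrow> int p dvd Nm i k"
    and eq: "\<forall>k\<in>D. [(\<Sum>i\<in>D. c i * Nm i k) = (\<Sum>i\<in>D. c' i * Nm i k)] (mod int p)"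
  shows "c = c'"
proof (rule ccontr)
  assume ne: "c \<noteq> c'"
  let ?S = "{i\<in>D. c i \<noteq> c' i}"
  have "?S \<noteq> {}"
  proof
    assume "?S = {}"
    then have "\<And>i. i \<in> D \<Longrightarrow> c i = c' i" by auto
    then show False using ne PiE_ext[OF c c'] by blast
  qed
  moreover have "finite ?S" using fin by simp
  ultimately have kS: "Min ?S \<in> ?S" by (rule Min_in[rotated])
  define k where "k = Min ?S"
  have kD: "k \<in> D" and ck: "c k \<noteq> c' k" using kS k_def by auto
  have below: "\<And>i. i \<in> D \<Longrightarrow> i < k \<Longrightarrow> c i = c' i"
  proof (rule ccontr)
    fix i assume "i \<in> D" "i < k" "c i \<noteq> c' i"
    then have "k \<le> i" unfolding k_def using fin by (intro Min_le) auto
    then show False using \<open>i < k\<close> by simp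
  qed
  have "int p dvd (\<Sum>i\<in>D. c i * Nm i k) - (\<Sum>i\<in>D. c' i * Nm i k)"
    using eq kD by (simp add: cong_iff_dvd_diff)
  then have d1: "int p dvd (\<Sum>i\<in>D. (c i - c' i) * Nm i k)"
    by (simp add: sum_subtractf left_diff_distrib)
  have split: "(\<Sum>i\<in>D. (c i - c' i) * Nm i k) = (c k - c' k) * Nm k k + (\<Sum>i\<in>D - {k}. (c i - c' i) * Nm i k)"
    using fin kD by (simp add: sum.remove)
  have "int p dvd (\<Sum>i\<in>D - {k}. (c i - c' i) * Nm i k)"
  proof (rule dvd_sum)
    fix i assume i: "i \<in> D - {k}"
    show "int p dvd (c i - c' i) * Nm i k"
    proof (cases "i < k")
      case True then show ?thesis using below i by simp
    next
      case False then have "k < i" using i by simp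
      then show ?thesis using low i kD by simp
    qed
  qed
  then have d2: "int p dvd (\<Sum>i\<in>D - {k}. (c i - c' i) * Nm i k)" .
  have eq3: "(c k - c' k) * Nm k k = (\<Sum>i\<in>D. (c i - c' i) * Nm i k) - (\<Sum>i\<in>D - {k}. (c i - c' i) * Nm i k)"
    using split by simp
  have d3: "int p dvd (c k - c' k) * Nm k k"
    unfolding eq3 by (rule dvd_diff[OF d1 d2])
  have pi: "prime (int p)" using pr by simp
  have nd: "\<not> int p dvd Nm k k" using diag kD by blast
  have "int p dvd (c k - c' k)" using d3 nd prime_dvd_mult_iff[OF pi] by blast
  then have "c k mod int p = c' k mod int p" by (simp add: mod_eq_dvd_iff)
  moreover have "c k mod int p = c k" "c' k mod int p = c' k"
    using c c' kD by (auto simp: PiE_iff)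
  ultimately show False using ck by simp
qed

lemma card_Zp_funs:
  assumes "finite D"
  shows "card (PiE D (\<lambda>_. {0..<int p})) = p ^ card D"
  using assms by (simp add: card_PiE)



lemma rank_bound:
  fixes Nm :: "nat \<Rightarrow> nat \<Rightarrow> int" and U C :: "'j \<Rightarrow> nat \<Rightarrow> int"
    and wA :: "'e \<Rightarrow> nat \<Rightarrow> int" and uC :: "'f \<Rightarrow> nat \<Rightarrow> int"
    and gA :: "'e \<Rightarrow> 'j" and gC :: "'f \<Rightarrow> 'j"
  assumes pr: "prime p" and fin: "finite D" "finite J" "finite EA" "finite EC"
    and gA: "gA ` EA \<subseteq> J" and gC: "gC ` EC \<subseteq> J"
    and diag: "\<forall>i\<in>D. \<not> int p dvd Nm i i"
    and low: "\<forall>i\<in>D. \<forall>k\<in>D. k < i \<longrightarrow> int p dvd Nm i k"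
    and dec: "\<forall>i\<in>D. \<forall>k\<in>D. [Nm i k = (\<Sum>e\<in>EA. U (gA e) i * wA e k) + (\<Sum>e\<in>EC. uC e i * C (gC e) k)] (mod int p)"
  shows "card D \<le> 2 * card J"
proof -
  define X1 where "X1 c \<alpha> = (\<Sum>i\<in>D. c i * U \<alpha> i)" for c and \<alpha>
  define X3 where "X3 c \<gamma> = (\<Sum>e\<in>{e\<in>EC. gC e = \<gamma>}. \<Sum>i\<in>D. c i * uC e i)" for c and \<gamma>
  define \<Psi> where "\<Psi> c = (restrict (\<lambda>\<alpha>. X1 c \<alpha> mod int p) J, restrict (\<lambda>\<gamma>. X3 c \<gamma> mod int p) J)" for c
  have key: "[(\<Sum>i\<in>D. c i * Nm i k) = (\<Sum>e\<in>EA. X1 c (gA e) * wA e k) + (\<Sum>\<gamma>\<in>J. X3 c \<gamma> * C \<gamma> k)] (mod int p)"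
    if k: "k \<in> D" for c k
  proof -
    have "[(\<Sum>i\<in>D. c i * Nm i k) = (\<Sum>i\<in>D. c i * ((\<Sum>e\<in>EA. U (gA e) i * wA e k) + (\<Sum>e\<in>EC. uC e i * C (gC e) k)))] (mod int p)"
      using dec k by (intro cong_sum cong_mult cong_refl) auto
    also have "(\<Sum>i\<in>D. c i * ((\<Sum>e\<in>EA. U (gA e) i * wA e k) + (\<Sum>e\<in>EC. uC e i * C (gC e) k))) =
       (\<Sum>e\<in>EA. X1 c (gA e) * wA e k) + (\<Sum>e\<in>EC. (\<Sum>i\<in>D. c i * uC e i) * C (gC e) k)"
    proof -
      have a1: "(\<Sum>i\<in>D. c i * (\<Sum>e\<in>EA. U (gA e) i * wA e k)) = (\<Sum>e\<in>EA. X1 c (gA e) * wA e k)"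
      proof -
        have "(\<Sum>i\<in>D. c i * (\<Sum>e\<in>EA. U (gA e) i * wA e k)) = (\<Sum>i\<in>D. \<Sum>e\<in>EA. c i * U (gA e) i * wA e k)"
          by (simp add: sum_distrib_left mult.assoc)
        also have "\<dots> = (\<Sum>e\<in>EA. \<Sum>i\<in>D. c i * U (gA e) i * wA e k)"
          by (rule sum.swap)
        also have "\<dots> = (\<Sum>e\<in>EA. X1 c (gA e) * wA e k)"
          unfolding X1_def by (simp add: sum_distrib_right)
        finally show ?thesis .
      qed
      have a3: "(\<Sum>i\<in>D. c i * (\<Sum>e\<in>EC. uC e i * C (gC e) k)) = (\<Sum>e\<in>EC. (\<Sum>i\<in>D. c i * uC e i) * C (gC e) k)"
      proof -
        have "(\<Sum>i\<in>D. c i * (\<Sum>e\<in>EC. uC e i * C (gC e) k)) = (\<Sum>i\<in>D. \<Sum>e\<in>EC. c i * uC e i * C (gC e) k)"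
          by (simp add: sum_distrib_left mult.assoc)
        also have "\<dots> = (\<Sum>e\<in>EC. \<Sum>i\<in>D. c i * uC e i * C (gC e) k)"
          by (rule sum.swap)
        also have "\<dots> = (\<Sum>e\<in>EC. (\<Sum>i\<in>D. c i * uC e i) * C (gC e) k)"
          by (simp add: sum_distrib_right)
        finally show ?thesis .
      qed
      show ?thesis using a1 a3 by (simp add: distrib_left sum.distrib)
    qed
    also have "(\<Sum>e\<in>EC. (\<Sum>i\<in>D. c i * uC e i) * C (gC e) k) = (\<Sum>\<gamma>\<in>J. X3 c \<gamma> * C \<gamma> k)"
    proof -
      have "(\<Sum>e\<in>EC. (\<Sum>i\<in>D. c i * uC e i) * C (gC e) k) =
          (\<Sum>\<gamma>\<in>J. \<Sum>e\<in>{e\<in>EC. gC e = \<gamma>}. (\<Sum>i\<in>D. c i * uC e i) * C (gC e) k)"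
        by (rule sum.group[symmetric]) (use fin gC in auto)
      also have "\<dots> = (\<Sum>\<gamma>\<in>J. X3 c \<gamma> * C \<gamma> k)"
        unfolding X3_def by (intro sum.cong refl) (simp add: sum_distrib_right)
      finally show ?thesis .
    qed
    finally show ?thesis .
  qed
  have inj: "inj_on \<Psi> (PiE D (\<lambda>_. {0..<int p}))"
  proof (rule inj_onI)
    fix c c' assume c: "c \<in> PiE D (\<lambda>_. {0..<int p})" and c': "c' \<in> PiE D (\<lambda>_. {0..<int p})"
      and eqP: "\<Psi> c = \<Psi> c'"
    have e1: "[X1 c \<alpha> = X1 c' \<alpha>] (mod int p)" if "\<alpha> \<in> J" for \<alpha>
    proof -
      have "restrict (\<lambda>\<alpha>. X1 c \<alpha> mod int p) J \<alpha> = restrict (\<lambda>\<alpha>. X1 c' \<alpha> mod int p) J \<alpha>"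
        using eqP unfolding \<Psi>_def by simp
      then show ?thesis using that by (simp add: cong_def)
    qed
    have e3: "[X3 c \<gamma> = X3 c' \<gamma>] (mod int p)" if "\<gamma> \<in> J" for \<gamma>
    proof -
      have "restrict (\<lambda>\<gamma>. X3 c \<gamma> mod int p) J \<gamma> = restrict (\<lambda>\<gamma>. X3 c' \<gamma> mod int p) J \<gamma>"
        using eqP unfolding \<Psi>_def by simp
      then show ?thesis using that by (simp add: cong_def)
    qed
    show "c = c'"
    proof (rule triangular_inj[OF pr fin(1) c c' diag low], intro ballI)
      fix k assume k: "k \<in> D"
      have "[(\<Sum>e\<in>EA. X1 c (gA e) * wA e k) + (\<Sum>\<gamma>\<in>J. X3 c \<gamma> * C \<gamma> k) =
             (\<Sum>e\<in>EA. X1 c' (gA e) * wA e k) + (\<Sum>\<gamma>\<in>J. X3 c' \<gamma> * C \<gamma> k)] (mod int p)"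
        using gA by (intro cong_add cong_sum cong_mult cong_refl e1 e3) auto
      then show "[(\<Sum>i\<in>D. c i * Nm i k) = (\<Sum>i\<in>D. c' i * Nm i k)] (mod int p)"
        using key[OF k, of c] key[OF k, of c'] by (meson cong_sym cong_trans)
    qed
  qed
  have img: "\<Psi> ` (PiE D (\<lambda>_. {0..<int p})) \<subseteq> PiE J (\<lambda>_. {0..<int p}) \<times> PiE J (\<lambda>_. {0..<int p})"
    using prime_gt_0_nat[OF pr] unfolding \<Psi>_def by (auto simp: PiE_iff)
  have "card (PiE D (\<lambda>_. {0..<int p})) \<le> card (PiE J (\<lambda>_. {0..<int p}) \<times> PiE J (\<lambda>_. {0..<int p}))"
    by (rule card_inj_on_le[OF inj img]) (use fin in \<open>simp add: finite_PiE\<close>)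
  then have "p ^ card D \<le> p ^ (2 * card J)"
    using fin by (simp add: card_Zp_funs card_cartesian_product mult_2 power_add)
  then show ?thesis using prime_gt_1_nat[OF pr] power_le_imp_le_exp by blast
qed




lemma big_support:
  fixes B :: "'j \<Rightarrow> nat \<Rightarrow> int"
  assumes pr: "prime p" and finJ: "finite J" and finM: "finite M"
  shows "\<exists>v \<in> PiE M (\<lambda>_. {0..<int p}). (\<forall>\<beta>\<in>J. int p dvd (\<Sum>j\<in>M. v j * B \<beta> j)) \<and>
           card M \<le> card {j\<in>M. v j \<noteq> 0} + card J"
proof -
  have p0: "int p > 0" using prime_gt_0_nat[OF pr] by simp
  define Z where "Z = PiE M (\<lambda>_. {0..<int p})"
  define W where "W = {v\<in>Z. \<forall>\<beta>\<in>J. int p dvd (\<Sum>j\<in>M. v j * B \<beta> j)}"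
  define sz where "sz v = card {j\<in>M. v j \<noteq> (0::int)}" for v
  have finW: "finite W" unfolding W_def Z_def using finM by (simp add: finite_PiE)
  have zW: "(\<lambda>j\<in>M. 0) \<in> W" unfolding W_def Z_def using p0 by auto
  define K where "K = Max (sz ` W)"
  have "K \<in> sz ` W" unfolding K_def using finW zW by (intro Max_in) auto
  then obtain v where vW: "v \<in> W" and vK: "sz v = K" by auto
  have vmax: "\<And>u. u \<in> W \<Longrightarrow> sz u \<le> sz v" unfolding vK K_def using finW by auto
  define E where "E = {j\<in>M. v j \<noteq> 0}"
  have vZ: "v \<in> Z" using vW W_def by auto
  have "card M \<le> card E + card J"
  proof (rule ccontr)
    assume big: "\<not> card M \<le> card E + card J"
    have EM: "E \<subseteq> M" unfolding E_def by auto
    have cME: "card (M - E) = card M - card E" using finM EM by (simp add: card_Diff_subset finite_subset)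
    define F where "F = PiE (M - E) (\<lambda>_. {0..<int p})"
    define ext where "ext f = (\<lambda>j\<in>M. if j \<in> E then 0 else f j)" for f :: "nat \<Rightarrow> int"
    define L where "L f = restrict (\<lambda>\<beta>. (\<Sum>j\<in>M. ext f j * B \<beta> j) mod int p) J" for f
    have LF: "L ` F \<subseteq> PiE J (\<lambda>_. {0..<int p})" unfolding L_def using p0 by auto
    have "card (PiE J (\<lambda>_. {0..<int p})) < card F"
    proof -
      have "p ^ card J < p ^ (card M - card E)"
        using big prime_gt_1_nat[OF pr] by (intro power_strict_increasing) auto
      then show ?thesis unfolding F_def using finJ finM cME by (simp add: card_Zp_funs)
    qed
    then have "\<not> inj_on L F"
      using card_inj_on_le[OF _ LF] finJ by (meson finite_PiE finite.emptyI finite_atLeastLessThan_int leD)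
    then obtain f1 f2 where f1: "f1 \<in> F" and f2: "f2 \<in> F" and fne: "f1 \<noteq> f2" and Leq: "L f1 = L f2"
      unfolding inj_on_def by blast
    obtain t where t: "t \<in> M - E" and ft: "f1 t \<noteq> f2 t"
      using fne f1 f2 PiE_ext unfolding F_def by blast
    define w where "w = (\<lambda>j\<in>M. (ext f1 j - ext f2 j) mod int p)"
    define u where "u = (\<lambda>j\<in>M. (v j + w j) mod int p)"
    have uZ: "u \<in> Z" unfolding u_def Z_def using p0 by auto
    have uW: "u \<in> W"
    proof -
      have "int p dvd (\<Sum>j\<in>M. u j * B \<beta> j)" if \<beta>: "\<beta> \<in> J" for \<beta>
      proof -
        have c1: "[(\<Sum>j\<in>M. u j * B \<beta> j) = (\<Sum>j\<in>M. (v j + ext f1 j - ext f2 j) * B \<beta> j)] (mod int p)"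
        proof (rule cong_sum, rule cong_mult[OF _ cong_refl])
          fix j assume "j \<in> M"
          then show "[u j = v j + ext f1 j - ext f2 j] (mod int p)"
            unfolding u_def w_def cong_def by (simp add: mod_simps add_diff_eq)
        qed
        have "(\<Sum>j\<in>M. (v j + ext f1 j - ext f2 j) * B \<beta> j) =
              (\<Sum>j\<in>M. v j * B \<beta> j) + ((\<Sum>j\<in>M. ext f1 j * B \<beta> j) - (\<Sum>j\<in>M. ext f2 j * B \<beta> j))"
          by (simp add: algebra_simps sum.distrib sum_subtractf)
        moreover have "int p dvd (\<Sum>j\<in>M. v j * B \<beta> j)" using vW \<beta> W_def by auto
        moreover have "int p dvd ((\<Sum>j\<in>M. ext f1 j * B \<beta> j) - (\<Sum>j\<in>M. ext f2 j * B \<beta> j))"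
        proof -
          have "L f1 \<beta> = L f2 \<beta>" using Leq by simp
          then show ?thesis using \<beta> unfolding L_def by (simp add: mod_eq_dvd_iff)
        qed
        ultimately have "int p dvd (\<Sum>j\<in>M. (v j + ext f1 j - ext f2 j) * B \<beta> j)" by simp
        then show ?thesis using c1 by (simp add: cong_dvd_iff)
      qed
      then show ?thesis unfolding W_def using uZ by auto
    qed
    have "insert t E \<subseteq> {j\<in>M. u j \<noteq> 0}"
    proof
      fix j assume j: "j \<in> insert t E"
      show "j \<in> {j\<in>M. u j \<noteq> 0}"
      proof (cases "j = t")
        case True
        have vt: "v t = 0" using t E_def by auto
        have "ext f1 t = f1 t" "ext f2 t = f2 t" using t unfolding ext_def by auto
        moreover have "f1 t \<in> {0..<int p}" "f2 t \<in> {0..<int p}" using f1 f2 t unfolding F_def by auto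
        ultimately have "(ext f1 t - ext f2 t) mod int p \<noteq> 0" using ft
          by (auto simp: mod_eq_0_iff_dvd zdvd_not_zless dvd_imp_le_int)
           (smt (verit, del_insts) atLeastLessThan_iff mod_eq_0_iff_dvd mod_pos_pos_trivial mod_diff_eq)
        then show ?thesis using True t vt unfolding u_def w_def by auto
      next
        case False
        then have jE: "j \<in> E" using j by auto
        then have jM: "j \<in> M" using EM by auto
        have "w j = 0" using jE jM unfolding w_def ext_def by auto
        moreover have "v j \<in> {0..<int p}" using vZ jM Z_def by auto
        ultimately have "u j = v j" using jM unfolding u_def by auto
        then show ?thesis using jE E_def by auto
      qed
    qed
    then have "card (insert t E) \<le> sz u" unfolding sz_def using finM by (intro card_mono) auto
    moreover have "card (insert t E) = card E + 1" using t finM EM by (simp add: finite_subset)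
    moreover have "sz u \<le> card E" using vmax[OF uW] unfolding sz_def E_def .
    ultimately show False by simp
  qed
  then show ?thesis using vW unfolding W_def Z_def E_def by blast
qed




lemma finite_BM: "finite (bounded_monomials p n)"
proof -
  have "bounded_monomials p n \<subseteq> (\<lambda>f. \<lambda>i. if i < n then f i else 0) ` PiE {..<n} (\<lambda>_. {..p - 1})"
  proof
    fix e assume e: "e \<in> bounded_monomials p n"
    have "e = (\<lambda>i. if i < n then (restrict e {..<n}) i else 0)"
      using e unfolding bounded_monomials_def by (auto simp: fun_eq_iff)
    moreover have "restrict e {..<n} \<in> PiE {..<n} (\<lambda>_. {..p - 1})"
      using e unfolding bounded_monomials_def by auto
    ultimately show "e \<in> (\<lambda>f. \<lambda>i. if i < n then f i else 0) ` PiE {..<n} (\<lambda>_. {..p - 1})" by blast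
  qed
  then show ?thesis by (rule finite_subset) (simp add: finite_PiE)
qed

lemma tcd_nz: "tcd q \<kappa> \<noteq> 0 \<Longrightarrow> fst \<kappa> + fst (snd \<kappa>) + snd (snd \<kappa>) \<le> q"
  unfolding tcd_def tc_def by (cases \<kappa>) (auto split: if_splits)

lemma class3:
  assumes e: "e \<in> PE (p - 1) n" and cz: "coef (p - 1) n e \<noteq> 0"
  shows "ea n e \<in> bounded_monomials p n \<or> eb n e \<in> bounded_monomials p n \<or> ec n e \<in> bounded_monomials p n"
proof -
  let ?q = "p - 1"
  have et: "e t \<in> KK ?q" if "t < n" for t using e that unfolding PE_def by auto
  have nz: "tcd ?q (e t) \<noteq> 0" if "t < n" for t
    using cz that unfolding coef_def by auto
  have le: "ea n e t + eb n e t + ec n e t \<le> ?q" if "t < n" for t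
    using tcd_nz[OF nz[OF that]] that unfolding ea_def eb_def ec_def by simp
  have "(\<Sum>t<n. ea n e t + eb n e t + ec n e t) \<le> n * ?q"
    using sum_bounded_above[of "{..<n}" "\<lambda>t. ea n e t + eb n e t + ec n e t" ?q] le by simp
  then have tot: "(\<Sum>t<n. ea n e t) + (\<Sum>t<n. eb n e t) + (\<Sum>t<n. ec n e t) \<le> ?q * n"
    by (simp add: sum.distrib mult.commute)
  have bnd: "ea n e t \<le> ?q \<and> eb n e t \<le> ?q \<and> ec n e t \<le> ?q" if "t < n" for t
    using le[OF that] by simp
  have zero: "ea n e t = 0 \<and> eb n e t = 0 \<and> ec n e t = 0" if "t \<ge> n" for t
    using that unfolding ea_def eb_def ec_def by simp
  consider "3 * (\<Sum>t<n. ea n e t) \<le> ?q * n" | "3 * (\<Sum>t<n. eb n e t) \<le> ?q * n" | "3 * (\<Sum>t<n. ec n e t) \<le> ?q * n"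
    using tot by linarith
  then show ?thesis
    unfolding bounded_monomials_def using bnd zero by cases auto
qed

theorem theorem3:
  fixes p n m :: nat and a b c :: "nat \<Rightarrow> nat \<Rightarrow> nat"
  assumes "prime p" and "n > 0"
    and "tricolored_ordered_sum_free p n m a b c"
  shows "m \<le> 3 * card (bounded_monomials p n)"
proof -
  note pr = assms(1)
  have p0: "int p > 0" using prime_gt_0_nat[OF pr] by simp
  define q where "q = p - 1"
  define BM where "BM = bounded_monomials p n"
  define M where "M = {1..m}"
  define PEs where "PEs = PE q n"
  define Am where "Am \<alpha> i = mon n (a i) \<alpha>" for \<alpha> i
  define Bm where "Bm \<beta> j = mon n (b j) \<beta>" for \<beta> j
  define Cm where "Cm \<gamma> k = mon n (c k) \<gamma>" for \<gamma> k
  define T where "T i j k = (if sum3_zero p n (a i) (b j) (c k) then 1 else (0::int))" for i j k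
  have finBM: "finite BM" unfolding BM_def by (rule finite_BM)
  have finM: "finite M" unfolding M_def by simp
  have finPE: "finite PEs" unfolding PEs_def by (rule finite_PE)
  have decT: "[T i j k = (\<Sum>e\<in>PEs. coef q n e * Am (ea n e) i * Bm (eb n e) j * Cm (ec n e) k)] (mod int p)" for i j k
    unfolding T_def PEs_def q_def Am_def Bm_def Cm_def by (rule ind_decomp[OF pr])
  have tri: "\<forall>i\<in>M. \<forall>j\<in>M. \<forall>k\<in>M. sum3_zero p n (a i) (b j) (c k) \<longrightarrow> i \<le> j \<and> j \<le> k"
    using assms(3) unfolding tricolored_ordered_sum_free_def M_def by (elim conjE)
  have dg: "\<forall>i\<in>M. sum3_zero p n (a i) (b i) (c i)"
    using assms(3) unfolding tricolored_ordered_sum_free_def M_def by (elim conjE)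
  obtain v where vZ: "v \<in> PiE M (\<lambda>_. {0..<int p})"
    and vW: "\<forall>\<beta>\<in>BM. int p dvd (\<Sum>j\<in>M. v j * Bm \<beta> j)"
    and vD: "card M \<le> card {j\<in>M. v j \<noteq> 0} + card BM"
    using big_support[OF pr finBM finM, of Bm] by blast
  define D where "D = {j\<in>M. v j \<noteq> 0}"
  have DM: "D \<subseteq> M" unfolding D_def by auto
  have finD: "finite D" using finM DM finite_subset by blast
  define Nm where "Nm i k = (\<Sum>j\<in>M. v j * T i j k)" for i k
  have diag: "\<forall>i\<in>D. \<not> int p dvd Nm i i"
  proof
    fix i assume iD: "i \<in> D"
    then have iM: "i \<in> M" using DM by auto
    have "Nm i i = (\<Sum>j\<in>M. if j = i then v j else 0)"
      unfolding Nm_def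
    proof (rule sum.cong[OF refl])
      fix j assume jM: "j \<in> M"
      show "v j * T i j i = (if j = i then v j else 0)"
      proof (cases "j = i")
        case True then show ?thesis using dg iM by (simp add: T_def)
      next
        case False
        then have "\<not> sum3_zero p n (a i) (b j) (c i)" using tri iM jM by (meson order_antisym)
        then show ?thesis using False by (simp add: T_def)
      qed
    qed
    also have "\<dots> = v i" using iM finM by simp
    finally have "Nm i i = v i" .
    moreover have "0 < v i" "v i < int p" using vZ iD DM unfolding D_def by (auto simp: PiE_iff)
    ultimately show "\<not> int p dvd Nm i i" using zdvd_not_zless by auto
  qed
  have low: "\<forall>i\<in>D. \<forall>k\<in>D. k < i \<longrightarrow> int p dvd Nm i k"
  proof (intro ballI impI)
    fix i k assume iD: "i \<in> D" and kD: "k \<in> D" and ki: "k < i"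
    have "Nm i k = 0" unfolding Nm_def
    proof (rule sum.neutral, rule ballI)
      fix j assume jM: "j \<in> M"
      have "\<not> sum3_zero p n (a i) (b j) (c k)" using tri iD kD DM jM ki by fastforce
      then show "v j * T i j k = 0" by (simp add: T_def)
    qed
    then show "int p dvd Nm i k" by simp
  qed
  define S where "S e = (\<Sum>j\<in>M. v j * Bm (eb n e) j)" for e
  define E1 where "E1 = {e\<in>PEs. ea n e \<in> BM}"
  define E2 where "E2 = {e\<in>PEs. ea n e \<notin> BM \<and> eb n e \<in> BM}"
  define E3' where "E3' = {e\<in>PEs. ea n e \<notin> BM \<and> eb n e \<notin> BM}"
  define E3 where "E3 = {e\<in>PEs. ea n e \<notin> BM \<and> eb n e \<notin> BM \<and> coef q n e \<noteq> 0}"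
  define w1 where "w1 e k = coef q n e * S e * Cm (ec n e) k" for e k
  define u3 where "u3 e i = coef q n e * Am (ea n e) i * S e" for e i
  have g1: "ea n ` E1 \<subseteq> BM" unfolding E1_def by auto
  have g3: "ec n ` E3 \<subseteq> BM"
  proof
    fix x assume "x \<in> ec n ` E3"
    then obtain e where e: "e \<in> E3" and x: "x = ec n e" by auto
    show "x \<in> BM" using class3[of e p n] e unfolding E3_def PEs_def q_def BM_def x by auto
  qed
  have finE1: "finite E1" "finite E2" "finite E3" "finite E3'"
    using finPE unfolding E1_def E2_def E3_def E3'_def by auto
  have dec: "\<forall>i\<in>D. \<forall>k\<in>D. [Nm i k = (\<Sum>e\<in>E1. Am (ea n e) i * w1 e k) + (\<Sum>e\<in>E3. u3 e i * Cm (ec n e) k)] (mod int p)"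
  proof (intro ballI)
    fix i k assume "i \<in> D" "k \<in> D"
    define G where "G e = coef q n e * Am (ea n e) i * S e * Cm (ec n e) k" for e
    have "[Nm i k = (\<Sum>j\<in>M. v j * (\<Sum>e\<in>PEs. coef q n e * Am (ea n e) i * Bm (eb n e) j * Cm (ec n e) k))] (mod int p)"
      unfolding Nm_def by (intro cong_sum cong_mult cong_refl decT)
    also have "(\<Sum>j\<in>M. v j * (\<Sum>e\<in>PEs. coef q n e * Am (ea n e) i * Bm (eb n e) j * Cm (ec n e) k)) = (\<Sum>e\<in>PEs. G e)"
    proof -
      have "(\<Sum>j\<in>M. v j * (\<Sum>e\<in>PEs. coef q n e * Am (ea n e) i * Bm (eb n e) j * Cm (ec n e) k)) =
            (\<Sum>j\<in>M. \<Sum>e\<in>PEs. v j * (coef q n e * Am (ea n e) i * Bm (eb n e) j * Cm (ec n e) k))"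
        by (simp add: sum_distrib_left)
      also have "\<dots> = (\<Sum>e\<in>PEs. \<Sum>j\<in>M. v j * (coef q n e * Am (ea n e) i * Bm (eb n e) j * Cm (ec n e) k))"
        by (rule sum.swap)
      also have "\<dots> = (\<Sum>e\<in>PEs. G e)"
        unfolding G_def S_def
        by (rule sum.cong[OF refl]) (simp add: sum_distrib_left sum_distrib_right mult_ac)
      finally show ?thesis .
    qed
    also have "(\<Sum>e\<in>PEs. G e) = (\<Sum>e\<in>E1. G e) + (\<Sum>e\<in>E2. G e) + (\<Sum>e\<in>E3'. G e)"
    proof -
      have "PEs = E1 \<union> E2 \<union> E3'" unfolding E1_def E2_def E3'_def by auto
      moreover have "E1 \<inter> E2 = {}" "(E1 \<union> E2) \<inter> E3' = {}" unfolding E1_def E2_def E3'_def by auto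
      ultimately show ?thesis using finE1 by (simp add: sum.union_disjoint)
    qed
    also have "(\<Sum>e\<in>E3'. G e) = (\<Sum>e\<in>E3. G e)"
      by (rule sum.mono_neutral_right) (use finE1 in \<open>auto simp: E3_def E3'_def G_def\<close>)
    also have "[(\<Sum>e\<in>E1. G e) + (\<Sum>e\<in>E2. G e) + (\<Sum>e\<in>E3. G e) = (\<Sum>e\<in>E1. G e) + 0 + (\<Sum>e\<in>E3. G e)] (mod int p)"
    proof -
      have "int p dvd (\<Sum>e\<in>E2. G e)"
      proof (rule dvd_sum)
        fix e assume "e \<in> E2"
        then have "int p dvd S e" using vW unfolding E2_def S_def by auto
        then show "int p dvd G e" unfolding G_def by simp
      qed
      then have "[(\<Sum>e\<in>E2. G e) = 0] (mod int p)" by (simp add: cong_0_iff)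
      then show ?thesis by (intro cong_add cong_refl)
    qed
    also have "(\<Sum>e\<in>E1. G e) + 0 + (\<Sum>e\<in>E3. G e) = (\<Sum>e\<in>E1. Am (ea n e) i * w1 e k) + (\<Sum>e\<in>E3. u3 e i * Cm (ec n e) k)"
      unfolding G_def w1_def u3_def by (simp add: mult_ac)
    finally show "[Nm i k = (\<Sum>e\<in>E1. Am (ea n e) i * w1 e k) + (\<Sum>e\<in>E3. u3 e i * Cm (ec n e) k)] (mod int p)" .
  qed
  have "card D \<le> 2 * card BM"
    by (rule rank_bound[where U=Am and gA="ea n" and gC="ec n" and C=Cm and wA=w1 and uC=u3 and Nm=Nm,
        OF pr finD finBM finE1(1) finE1(3) g1 g3 diag low dec])
  moreover have "card M = m" unfolding M_def by simp
  ultimately show ?thesis using vD unfolding D_def BM_def by simp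
qed


end
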